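(* Fix $a\in(0,1/2]$ and $\beta\in(\frac12,1)$. For each $n$ let $k=2\lfloor \beta n/2\rfloor$ and let $\mathbf{x}^*\in\mathbb{R}^n$ be the vector whose only possibly nonzero entries are the $k$-th and $(k+1)$-th, \[ x_k^*=\frac{1+2\left(\frac kn+\frac1n\right)^{2}-2\left(\frac kn+\frac1n\right)-\frac1n}{\binom nk\,2\frac kn\left(2\frac kn-1+\frac1n\left(2\frac kn+\frac2n-1\right)\right)},\qquad x_{k+1}^*=\frac{1-\frac kn}{\binom n{k+1}\left(2\frac kn-1+\frac1n\left(2\frac kn+\frac2n-1\right)\right)}. \] Then for all sufficiently large $n$, $\mathbf{x}^*$ is a feasible point of the linear program defining $\overline{\Lambda}(n;a)$, and the value of its objective at $\mathbf{x}^*$ converges, as $n\to\infty$, to \[ -\left[1+(1-2\beta)\left(\tfrac1a-1\right)\right]\frac{1}{2\beta(2\beta-1)}. \] Consequently $\liminf_{n\to\infty}\overline{\Lambda}(n;a)\ge \sup_{\beta\in(1/2,1)}\left(-\left[1+(1-2\beta)(\frac1a-1)\right]\frac{1}{2\beta(2\beta-1)}\right)=\theta(a)$, where $\theta(a)=\frac{(1-\sqrt a)^2}{a}$ for $0<a<\frac14$ (the supremum being attained at $\beta=\frac{1}{2(1-\sqrt a)}$) and $\theta(a)=\frac{1}{2a}-1$ for $\frac14\le a\le\frac12$.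
   Context: For integers $n\ge1$, $k\in[0:n]$ and real $x$, the Krawtchouk polynomial is $K_k(x)=K_k^{(n)}(x):=\sum_{j=0}^{k}(-1)^{j}\binom{x}{j}\binom{n-x}{k-j}$, with generalized binomial coefficients $\binom{x}{j}=\frac{x(x-1)\cdots(x-j+1)}{j!}$. Here $[m:n]=\{m,m+1,\dots,n\}$. For real $a\in(0,1/2]$, $\overline{\Lambda}(n;a)$ is the optimal value of the linear program: maximize $-\sum_{k=1}^{n}\left[K_k(0)+K_k(1)\left(\frac1a-1\right)\right]x_k$ over $(x_1,\dots,x_n)\in\mathbb{R}^n$ subject to $x_k\ge0$ for $k\in[1:n]$ and $\sum_{k=1}^{n}[K_k(1)-K_k(i)]x_k\ge -1$ for all $i\in[2:n]$. *)

theory Defs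
  imports "HOL-Analysis.Analysis"
begin

definition kraw :: "nat \<Rightarrow> nat \<Rightarrow> real \<Rightarrow> real" where
  "kraw n k x = (\<Sum>j=0..k. (-1)^j * (x gchoose j) * ((real n - x) gchoose (k - j)))"

text \<open>Objective of the LP defining Lambda-bar(n;a); vectors in R^n are functions
  nat => real of which only the entries 1..n are used.\<close>
definition lp_objective :: "nat \<Rightarrow> real \<Rightarrow> (nat \<Rightarrow> real) \<Rightarrow> real" where
  "lp_objective n a x = - (\<Sum>k=1..n. (kraw n k 0 + kraw n k 1 * (1/a - 1)) * x k)"

definition lp_feasible :: "nat \<Rightarrow> (nat \<Rightarrow> real) \<Rightarrow> bool" where
  "lp_feasible n x \<longleftrightarrow> (\<forall>k\<in>{1..n}. x k \<ge> 0) \<and>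
     (\<forall>i\<in>{2..n}. (\<Sum>k=1..n. (kraw n k 1 - kraw n k (real i)) * x k) \<ge> -1)"

text \<open>Optimal value of the LP (as an extended real: supremum of the objective over
  the feasible set; the feasible set is nonempty since 0 is feasible).\<close>
definition Lambda_bar :: "nat \<Rightarrow> real \<Rightarrow> ereal" where
  "Lambda_bar n a = (SUP x\<in>{x. lp_feasible n x}. ereal (lp_objective n a x))"

definition kidx :: "real \<Rightarrow> nat \<Rightarrow> nat" where
  "kidx \<beta> n = nat (2 * \<lfloor>\<beta> * real n / 2\<rfloor>)"

definition xstar :: "real \<Rightarrow> nat \<Rightarrow> nat \<Rightarrow> real" where
  "xstar \<beta> n j =
    (let k = kidx \<beta> n; r = real k / real n; t = 1 / real n;
         D = 2 * r - 1 + t * (2 * r + 2 * t - 1) in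
     if j = k then (1 + 2 * (r + t)^2 - 2 * (r + t) - t) / (real (n choose k) * 2 * r * D)
     else if j = k + 1 then (1 - r) / (real (n choose (k + 1)) * D)
     else 0)"

definition theta :: "real \<Rightarrow> real" where
  "theta a = (if a < 1/4 then (1 - sqrt a)^2 / a else 1 / (2 * a) - 1)"

definition bound_fun :: "real \<Rightarrow> real \<Rightarrow> real" where
  "bound_fun a \<beta> = - (1 + (1 - 2 * \<beta>) * (1 / a - 1)) * (1 / (2 * \<beta> * (2 * \<beta> - 1)))"

end

theory Submission
  imports Defs
begin


lemma KL: "real (Suc s) * real (m choose Suc s) = (real m - real s) * real (m choose s)"
proof -
  have "real (Suc s) * real (m choose Suc s) = of_nat (Suc s) * ((real m) gchoose Suc s)"
    by (simp add: binomial_gbinomial)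
  also have "\<dots> = real m * ((real m - 1) gchoose s)" by (rule gbinomial_absorption)
  also have "\<dots> = (real m - real s) * ((real m) gchoose s)" by (simp add: gbinomial_absorb_comp)
  finally show ?thesis by (simp add: binomial_gbinomial)
qed

definition G :: "nat \<Rightarrow> nat \<Rightarrow> nat \<Rightarrow> real" where
  "G j m t = (\<Sum>h\<le>t. (-1)^h * real (j choose h) * real (m choose (t-h)))"

lemma G_rec: "(real t + 1) * G j m (Suc t) =
  (\<Sum>h\<le>t. (-1)^h * real (j choose h) * real (m choose (t-h)) * (real m - real t + 2*real h - real j))"
proof -
  define c where "c h = (-1::real)^h * real (j choose h) * real (m choose (Suc t - h))" for h
  have "(real t + 1) * G j m (Suc t) = (\<Sum>h\<le>Suc t. c h * (real (Suc t - h)) + c h * real h)"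
    unfolding G_def c_def sum_distrib_left
    by (rule sum.cong) (auto simp: algebra_simps of_nat_diff)
  also have "\<dots> = (\<Sum>h\<le>Suc t. c h * real (Suc t - h)) + (\<Sum>h\<le>Suc t. c h * real h)"
    by (simp add: sum.distrib)
  also have "(\<Sum>h\<le>Suc t. c h * real (Suc t - h)) = (\<Sum>h\<le>t. c h * real (Suc t - h))"
    by (simp add: sum.atMost_Suc)
  also have "\<dots> = (\<Sum>h\<le>t. (-1)^h * real (j choose h) * real (m choose (t-h)) * (real m - real t + real h))"
  proof (rule sum.cong[OF refl])
    fix h assume "h \<in> {..t}" then have h: "h \<le> t" by simp
    have "Suc t - h = Suc (t - h)" using h by simp
    then have "real (Suc t - h) * real (m choose (Suc t - h)) = (real m - real (t-h)) * real (m choose (t-h))"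
      using KL[of "t-h" m] by simp
    then have "c h * real (Suc t - h) = (-1)^h * real (j choose h) * ((real m - real (t-h)) * real (m choose (t-h)))"
      unfolding c_def by (metis (no_types, lifting) mult.assoc mult.commute)
    then show "c h * real (Suc t - h) = (-1)^h * real (j choose h) * real (m choose (t-h)) * (real m - real t + real h)"
      using h by (simp add: of_nat_diff algebra_simps)
  qed
  also have "(\<Sum>h\<le>Suc t. c h * real h) = (\<Sum>h\<le>t. c (Suc h) * real (Suc h))"
    by (subst sum.atMost_Suc_shift) simp
  also have "\<dots> = (\<Sum>h\<le>t. - ((-1)^h * real (j choose h) * real (m choose (t-h)) * (real j - real h)))"
  proof (rule sum.cong[OF refl])
    fix h
    show "c (Suc h) * real (Suc h) = - ((-1)^h * real (j choose h) * real (m choose (t-h)) * (real j - real h))"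
    proof -
      have e: "real (Suc h) * real (j choose Suc h) = (real j - real h) * real (j choose h)" by (rule KL)
      have "c (Suc h) * real (Suc h) = (-1)^Suc h * real (m choose (t-h)) * (real (Suc h) * real (j choose Suc h))"
        unfolding c_def by simp
      also have "\<dots> = (-1)^Suc h * real (m choose (t-h)) * ((real j - real h) * real (j choose h))"
        by (simp only: e)
      finally show ?thesis by (simp add: algebra_simps)
    qed
  qed
  finally show ?thesis
    by (simp add: sum_negf[symmetric] sum.distrib[symmetric] algebra_simps)
qed


lemma M1_nat: "(\<Sum>h\<le>Suc t. h * (Suc j choose h) * (m choose (Suc t - h))) = Suc j * ((j + m) choose t)"
proof -
  have "(\<Sum>h\<le>Suc t. h * (Suc j choose h) * (m choose (Suc t - h)))
      = (\<Sum>h\<le>t. Suc h * (Suc j choose Suc h) * (m choose (t - h)))"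
    by (subst sum.atMost_Suc_shift) simp
  also have "\<dots> = (\<Sum>h\<le>t. Suc j * ((j choose h) * (m choose (t - h))))"
    by (rule sum.cong[OF refl]) (simp only: Suc_times_binomial mult.assoc)
  also have "\<dots> = Suc j * ((j + m) choose t)"
    by (simp only: sum_distrib_left[symmetric] vandermonde)
  finally show ?thesis .
qed

lemma M1: "(\<Sum>h\<le>t. real h * real (j choose h) * real (m choose (t - h))) * real (j + m)
   = real t * real j * real ((j + m) choose t)"
proof (cases "t = 0 \<or> j = 0")
  case True
  then show ?thesis
  proof
    assume "t = 0" then show ?thesis by simp
  next
    assume j: "j = 0"
    have "(\<Sum>h\<le>t. real h * real (j choose h) * real (m choose (t - h))) = 0"
      by (rule sum.neutral) (auto simp: j)
    then show ?thesis using j by simp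
  qed
next
  case False
  then obtain t' j' where t: "t = Suc t'" and j: "j = Suc j'" by (metis not0_implies_Suc)
  have "(\<Sum>h\<le>t. real h * real (j choose h) * real (m choose (t - h)))
       = real (\<Sum>h\<le>Suc t'. h * (Suc j' choose h) * (m choose (Suc t' - h)))"
    unfolding t j by (simp only: of_nat_sum of_nat_mult)
  also have "\<dots> = real (Suc j') * real ((j' + m) choose t')" by (simp only: M1_nat of_nat_mult)
  finally have e: "(\<Sum>h\<le>t. real h * real (j choose h) * real (m choose (t - h))) = real (Suc j') * real ((j' + m) choose t')" .
  have f: "real (Suc (j' + m)) * real ((j' + m) choose t') = real (Suc t') * real (Suc (j'+m) choose Suc t')"
    using Suc_times_binomial[of t' "j'+m"] by (metis of_nat_mult)
  have jm: "j + m = Suc (j' + m)" using j by simp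
  have "real (Suc j') * real ((j' + m) choose t') * real (j + m) = real (Suc j') * (real (Suc (j' + m)) * real ((j' + m) choose t'))"
    unfolding jm by (simp only: mult_ac)
  also have "\<dots> = real (Suc j') * (real (Suc t') * real (Suc (j'+m) choose Suc t'))" by (simp only: f)
  also have "\<dots> = real t * real j * real ((j + m) choose t)" unfolding jm t j by (simp only: mult_ac add_Suc)
  finally show ?thesis unfolding e .
qed

lemma M2_nat: "(\<Sum>h\<le>Suc (Suc t). h * (h - 1) * (Suc (Suc j) choose h) * (m choose (Suc (Suc t) - h)))
    = Suc (Suc j) * Suc j * ((j + m) choose t)"
proof -
  have "(\<Sum>h\<le>Suc (Suc t). h * (h - 1) * (Suc (Suc j) choose h) * (m choose (Suc (Suc t) - h)))
      = (\<Sum>h\<le>t. Suc (Suc h) * Suc h * (Suc (Suc j) choose Suc (Suc h)) * (m choose (t - h)))"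
    by (simp add: sum.atMost_Suc_shift del: sum.atMost_Suc)
  also have "\<dots> = (\<Sum>h\<le>t. Suc (Suc j) * Suc j * ((j choose h) * (m choose (t - h))))"
  proof (rule sum.cong[OF refl])
    fix h
    have "Suc (Suc h) * Suc h * (Suc (Suc j) choose Suc (Suc h)) = Suc h * (Suc (Suc h) * (Suc (Suc j) choose Suc (Suc h)))"
      by (simp only: mult_ac)
    also have "\<dots> = Suc h * (Suc (Suc j) * (Suc j choose Suc h))" by (simp only: Suc_times_binomial)
    also have "\<dots> = Suc (Suc j) * (Suc h * (Suc j choose Suc h))" by (simp only: mult_ac)
    also have "\<dots> = Suc (Suc j) * (Suc j * (j choose h))" by (simp only: Suc_times_binomial)
    finally have X: "Suc (Suc h) * Suc h * (Suc (Suc j) choose Suc (Suc h)) = Suc (Suc j) * (Suc j * (j choose h))" .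
    show "Suc (Suc h) * Suc h * (Suc (Suc j) choose Suc (Suc h)) * (m choose (t - h)) =
         Suc (Suc j) * Suc j * ((j choose h) * (m choose (t - h)))" unfolding X by (simp only: mult.assoc)
  qed
  also have "\<dots> = Suc (Suc j) * Suc j * ((j + m) choose t)"
    by (simp only: sum_distrib_left[symmetric] vandermonde)
  finally show ?thesis .
qed

lemma M2: "(\<Sum>h\<le>t. real h * (real h - 1) * real (j choose h) * real (m choose (t - h))) * (real (j + m) * (real (j + m) - 1))
   = real t * (real t - 1) * real j * (real j - 1) * real ((j + m) choose t)"
proof (cases "t < 2 \<or> j < 2")
  case True
  have z: "(\<Sum>h\<le>t. real h * (real h - 1) * real (j choose h) * real (m choose (t - h))) = 0"
  proof (rule sum.neutral, intro ballI)
    fix h assume "h \<in> {..t}"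
    then show "real h * (real h - 1) * real (j choose h) * real (m choose (t - h)) = 0"
      using True by (cases "h < 2") (auto simp: less_2_cases_iff)
  qed
  show ?thesis unfolding z using True by (auto simp: less_2_cases_iff)
next
  case False
  then obtain t' j' where t: "t = Suc (Suc t')" and j: "j = Suc (Suc j')"
    by (metis add_2_eq_Suc le_add_diff_inverse not_less)
  have "(\<Sum>h\<le>t. real h * (real h - 1) * real (j choose h) * real (m choose (t - h)))
       = real (\<Sum>h\<le>Suc (Suc t'). h * (h - 1) * (Suc (Suc j') choose h) * (m choose (Suc (Suc t') - h)))"
    unfolding t j of_nat_sum
    by (rule sum.cong[OF refl]) (auto simp: of_nat_diff)
  also have "\<dots> = real (Suc (Suc j')) * real (Suc j') * real ((j' + m) choose t')" by (simp only: M2_nat of_nat_mult)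
  finally have e: "(\<Sum>h\<le>t. real h * (real h - 1) * real (j choose h) * real (m choose (t - h))) = real (Suc (Suc j')) * real (Suc j') * real ((j' + m) choose t')" .
  have f1: "real (Suc (j' + m)) * real ((j' + m) choose t') = real (Suc t') * real (Suc (j'+m) choose Suc t')"
    using Suc_times_binomial[of t' "j'+m"] by (metis of_nat_mult)
  have f2: "real (Suc (Suc (j' + m))) * real (Suc (j' + m) choose Suc t') = real (Suc (Suc t')) * real (Suc (Suc (j'+m)) choose Suc (Suc t'))"
    using Suc_times_binomial[of "Suc t'" "Suc (j'+m)"] by (metis of_nat_mult)
  have "real (j + m) * (real (j + m) - 1) * real ((j' + m) choose t') = real (Suc (Suc (j' + m))) * (real (Suc (j' + m)) * real ((j' + m) choose t'))"
    unfolding j by (simp del: binomial_Suc_Suc)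
  also have "\<dots> = real (Suc t') * (real (Suc (Suc (j' + m))) * real (Suc (j'+m) choose Suc t'))"
    unfolding f1 by (simp del: binomial_Suc_Suc)
  also have "\<dots> = real (Suc t') * real (Suc (Suc t')) * real (Suc (Suc (j'+m)) choose Suc (Suc t'))"
    unfolding f2 by (simp del: binomial_Suc_Suc)
  finally have g: "real (j + m) * (real (j + m) - 1) * real ((j' + m) choose t') = real (Suc t') * real (Suc (Suc t')) * real ((j + m) choose t)"
    unfolding t j by (simp del: binomial_Suc_Suc)
  have r1: "real t = real (Suc (Suc t'))" "real t - 1 = real (Suc t')" "real j = real (Suc (Suc j'))" "real j - 1 = real (Suc j')"
    unfolding t j by simp_all
  have "real (Suc (Suc j')) * real (Suc j') * real ((j' + m) choose t') * (real (j + m) * (real (j + m) - 1))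
     = real (Suc (Suc j')) * real (Suc j') * (real (j + m) * (real (j + m) - 1) * real ((j' + m) choose t'))"
    by (simp only: mult_ac)
  also have "\<dots> = real (Suc (Suc j')) * real (Suc j') * (real (Suc t') * real (Suc (Suc t')) * real ((j + m) choose t))"
    by (simp only: g)
  also have "\<dots> = real t * (real t - 1) * real j * (real j - 1) * real ((j + m) choose t)"
    unfolding r1(2) r1(4) unfolding r1(1) r1(3) by (simp only: mult_ac)
  finally show ?thesis unfolding e .
qed


lemma sum_lin: fixes F g :: "'a \<Rightarrow> real" shows "(\<Sum>h\<in>A. F h * (a + b * g h)) = a * (\<Sum>h\<in>A. F h) + b * (\<Sum>h\<in>A. F h * g h)"
  by (simp add: sum.distrib sum_distrib_left algebra_simps)

definition Eh :: "nat \<Rightarrow> nat \<Rightarrow> nat \<Rightarrow> real" where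
  "Eh n j t = G j (n - j) t / real (n choose t)"

lemma S0: "j \<le> n \<Longrightarrow> (\<Sum>h\<le>t. real (j choose h) * real ((n-j) choose (t - h))) = real (n choose t)"
  using vandermonde[of j "n-j" t] by (simp flip: of_nat_sum of_nat_mult)

lemma Eh_0: "j \<le> n \<Longrightarrow> Eh n j 0 = 1"
  by (simp add: Eh_def G_def)

lemma Eh_step:
  assumes "j \<le> n" "t < n"
  shows "Eh n j (Suc t) = (1 - 2 * real j / real n) * Eh n j t
     + (2 / (real n - real t)) * (\<Sum>h\<le>t. (-1)^h * (real (j choose h) * real ((n-j) choose (t - h)) / real (n choose t)) * (real h - real t * real j / real n))"
proof -
  let ?m = "n - j"
  define W where "W h = real (j choose h) * real (?m choose (t - h))" for h
  have Cpos: "real (n choose t) > 0" using assms by simp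
  have nt: "real n - real t > 0" using assms by simp
  have Cs: "real (n choose Suc t) > 0" using assms by simp
  have K: "real (Suc t) * real (n choose Suc t) = (real n - real t) * real (n choose t)" by (rule KL)
  have Gr: "(real t + 1) * G j ?m (Suc t) = (\<Sum>h\<le>t. (-1)^h * W h * (real ?m - real t + 2*real h - real j))"
    unfolding W_def using G_rec[where t=t and j=j and m="?m"] by (simp add: mult.assoc)
  have "Eh n j (Suc t) = G j ?m (Suc t) / real (n choose Suc t)" by (simp add: Eh_def)
  also have "\<dots> = (real t + 1) * G j ?m (Suc t) / (real (Suc t) * real (n choose Suc t))"
  proof -
    have "real t + 1 \<noteq> 0" by simp
    from nonzero_mult_divide_mult_cancel_left[OF this, of "G j ?m (Suc t)" "real (n choose Suc t)"]
    show ?thesis by (simp add: ac_simps)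
  qed
  also have "\<dots> = (real t + 1) * G j ?m (Suc t) / ((real n - real t) * real (n choose t))"
    by (simp only: K)
  also have "\<dots> = (\<Sum>h\<le>t. (-1)^h * W h * (real ?m - real t + 2*real h - real j)) / ((real n - real t) * real (n choose t))"
    by (simp only: Gr)
  also have "\<dots> = (\<Sum>h\<le>t. (-1)^h * (W h / real (n choose t)) * ((1 - 2 * real j / real n) + 2 / (real n - real t) * (real h - real t * real j / real n)))"
    unfolding sum_divide_distrib
  proof (rule sum.cong[OF refl])
    fix h
    have "real ?m = real n - real j" using assms by (simp add: of_nat_diff)
    moreover have "real n > 0" using assms by simp
    ultimately show "(-1)^h * W h * (real ?m - real t + 2*real h - real j) / ((real n - real t) * real (n choose t))
      = (-1)^h * (W h / real (n choose t)) * ((1 - 2 * real j / real n) + 2 / (real n - real t) * (real h - real t * real j / real n))"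
      using nt Cpos by (simp add: field_simps)
  qed
  also have "\<dots> = (1 - 2 * real j / real n) * (\<Sum>h\<le>t. (-1)^h * (W h / real (n choose t)))
      + (2 / (real n - real t)) * (\<Sum>h\<le>t. (-1)^h * (W h / real (n choose t)) * (real h - real t * real j / real n))"
    by (rule sum_lin)
  also have "(\<Sum>h\<le>t. (-1)^h * (W h / real (n choose t))) = Eh n j t"
    by (simp add: Eh_def G_def W_def sum_divide_distrib mult.assoc)
  finally show ?thesis unfolding W_def .
qed

lemma var_bound:
  assumes "j \<le> n" "t \<le> n" "2 \<le> n"
  shows "(\<Sum>h\<le>t. real (j choose h) * real ((n-j) choose (t - h)) * (real h - real t * real j / real n)^2) \<le> real t * real (n choose t)"
proof -
  let ?m = "n - j"
  define W where "W h = real (j choose h) * real (?m choose (t - h))" for h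
  define \<mu> where "\<mu> = real t * real j / real n"
  define C where "C = real (n choose t)"
  have jm: "j + ?m = n" using assms by simp
  have s0: "(\<Sum>h\<le>t. W h) = C" unfolding W_def C_def using S0[OF assms(1)] .
  have s1: "(\<Sum>h\<le>t. real h * W h) * real n = real t * real j * C"
    using M1[where t=t and j=j and m="?m"] unfolding W_def C_def jm by (simp add: mult.assoc)
  have s2: "(\<Sum>h\<le>t. real h * (real h - 1) * W h) * (real n * (real n - 1)) = real t * (real t - 1) * real j * (real j - 1) * C"
    using M2[where t=t and j=j and m="?m"] unfolding W_def C_def jm by (simp add: mult.assoc)
  have n0: "real n > 0" "real n - 1 > 0" using assms by auto
  have "(\<Sum>h\<le>t. W h * (real h - \<mu>)^2) = (\<Sum>h\<le>t. real h * (real h - 1) * W h) + (1 - 2*\<mu>) * (\<Sum>h\<le>t. real h * W h) + \<mu>^2 * (\<Sum>h\<le>t. W h)"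
    by (simp add: sum_distrib_left sum.distrib[symmetric] power2_eq_square algebra_simps)
  also have "\<dots> = C * (real t * (real t - 1) * real j * (real j - 1) / (real n * (real n - 1)) + (1 - 2*\<mu>) * \<mu> + \<mu>^2)"
  proof -
    have a: "(\<Sum>h\<le>t. real h * (real h - 1) * W h) = real t * (real t - 1) * real j * (real j - 1) * C / (real n * (real n - 1))"
      using s2 n0 by (simp add: field_simps)
    have b: "(\<Sum>h\<le>t. real h * W h) = \<mu> * C" using s1 n0 unfolding \<mu>_def by (simp add: field_simps)
    show ?thesis unfolding a b s0 by (simp add: algebra_simps)
  qed
  also have "\<dots> = C * (real t * real j * (real n - real t) * (real n - real j) / (real n ^ 2 * (real n - 1)))"
  proof -
    have "real t * (real t - 1) * real j * (real j - 1) / (real n * (real n - 1)) + (1 - 2*\<mu>) * \<mu> + \<mu>^2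
      = real t * real j * (real n - real t) * (real n - real j) / (real n ^ 2 * (real n - 1))"
      unfolding \<mu>_def using n0 by (simp add: field_simps power2_eq_square)
    then show ?thesis by simp
  qed
  also have "\<dots> \<le> C * real t"
  proof -
    have C0: "C \<ge> 0" unfolding C_def by simp
    have "real j * (real n - real j) \<le> real n * (real n - 1)"
    proof (cases "j = n")
      case True then show ?thesis using n0 by simp
    next
      case False
      then have "real j \<le> real n - 1" using assms by linarith
      moreover have "real n - real j \<le> real n" by simp
      ultimately show ?thesis using mult_mono[of "real j" "real n - 1" "real n - real j" "real n"] n0 assms
        by (simp add: mult.commute)
    qed
    moreover have "0 \<le> real n - real t" "real n - real t \<le> real n" using assms by auto
    ultimately have "real j * (real n - real j) * (real n - real t) \<le> real n * (real n - 1) * real n"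
      using mult_mono[of "real j * (real n - real j)" "real n * (real n - 1)" "real n - real t" "real n"] n0 by simp
    then have "real t * (real j * (real n - real j) * (real n - real t)) \<le> real t * (real n * (real n - 1) * real n)"
      by (rule mult_left_mono) simp
    then have "real t * (real j * (real n - real j) * (real n - real t)) / (real n ^ 2 * (real n - 1)) \<le> real t * (real n * (real n - 1) * real n) / (real n ^ 2 * (real n - 1))"
      by (rule divide_right_mono) (use n0 in simp)
    also have "\<dots> = real t" using n0 by (simp add: field_simps power2_eq_square)
    finally have "real t * real j * (real n - real t) * (real n - real j) / (real n ^ 2 * (real n - 1)) \<le> real t"
      by (simp add: mult_ac)
    from mult_left_mono[OF this C0] show ?thesis by simp
  qed
  finally show ?thesis unfolding W_def \<mu>_def C_def by (simp add: mult.commute)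
qed


lemma abs_le_amgm: "(s::real) > 0 \<Longrightarrow> \<bar>x\<bar> \<le> (x^2 / s + s) / 2"
proof -
  assume s: "s > 0"
  have "0 \<le> (\<bar>x\<bar> - s)^2" by simp
  then have "2 * s * \<bar>x\<bar> \<le> x^2 + s^2" by (simp add: power2_eq_square algebra_simps)
  then show ?thesis using s by (simp add: field_simps power2_eq_square)
qed

lemma step_bound:
  assumes jn: "j \<le> n" and n2: "2 \<le> n" and t: "2 * t < n"
  shows "\<bar>Eh n j (Suc t)\<bar> \<le> \<bar>1 - 2 * real j / real n\<bar> * \<bar>Eh n j t\<bar> + 4 / sqrt (real n)"
proof -
  have tn: "t < n" using t by simp
  define W where "W h = real (j choose h) * real ((n-j) choose (t - h))" for h
  define C where "C = real (n choose t)"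
  define \<mu> where "\<mu> = real t * real j / real n"
  define s where "s = sqrt (real n)"
  have C0: "C > 0" unfolding C_def using tn by simp
  have s0: "s > 0" unfolding s_def using n2 by simp
  have W0: "W h \<ge> 0" for h unfolding W_def by simp
  have sW: "(\<Sum>h\<le>t. W h) = C" unfolding W_def C_def using S0[OF jn] .
  have vb: "(\<Sum>h\<le>t. W h * (real h - \<mu>)^2) \<le> real t * C"
    unfolding W_def C_def \<mu>_def using var_bound[OF jn _ n2, of t] tn by simp
  have "(\<Sum>h\<le>t. W h * \<bar>real h - \<mu>\<bar>) \<le> (\<Sum>h\<le>t. W h * (((real h - \<mu>)^2 / s + s) / 2))"
    by (rule sum_mono, rule mult_left_mono[OF abs_le_amgm[OF s0] W0])
  also have "\<dots> = ((\<Sum>h\<le>t. W h * (real h - \<mu>)^2) / s + s * C) / 2"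
    unfolding sW[symmetric] by (simp add: sum_distrib_left sum_divide_distrib sum.distrib[symmetric] algebra_simps add_divide_distrib)
  also have "\<dots> \<le> (real t * C / s + s * C) / 2"
    using vb s0 by (simp add: divide_right_mono)
  also have "\<dots> \<le> (s * C + s * C) / 2"
  proof -
    have "real t \<le> s * s" unfolding s_def using tn by simp
    then have "real t * C \<le> s * s * C" using C0 by (simp add: mult_right_mono)
    then have "real t * C / s \<le> s * C" using s0 by (simp add: field_simps)
    then show ?thesis by (simp add: mult.commute)
  qed
  finally have A: "(\<Sum>h\<le>t. W h * \<bar>real h - \<mu>\<bar>) \<le> s * C" by (simp add: mult.commute)
  have nt: "real n - real t > 0" using tn by simp
  have B: "\<bar>(\<Sum>h\<le>t. (-1)^h * (W h / C) * (real h - \<mu>))\<bar> \<le> s"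
  proof -
    have "\<bar>(\<Sum>h\<le>t. (-1)^h * (W h / C) * (real h - \<mu>))\<bar> \<le> (\<Sum>h\<le>t. \<bar>(-1)^h * (W h / C) * (real h - \<mu>)\<bar>)"
      by (rule sum_abs)
    also have "\<dots> = (\<Sum>h\<le>t. W h * \<bar>real h - \<mu>\<bar>) / C"
      unfolding sum_divide_distrib using W0 C0 by (intro sum.cong) (auto simp: abs_mult power_abs)
    also have "\<dots> \<le> s" using A C0 by (simp add: field_simps)
    finally show ?thesis .
  qed
  have st: "2 / (real n - real t) * s \<le> 4 / s"
  proof -
    have "s * s = real n" unfolding s_def by simp
    moreover have "2 * real t < real n" using t by linarith
    ultimately have "2 * (s * s) \<le> 4 * (real n - real t)" by simp
    then show ?thesis using s0 nt by (simp add: field_simps)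
  qed
  have "\<bar>Eh n j (Suc t)\<bar> = \<bar>(1 - 2 * real j / real n) * Eh n j t + (2 / (real n - real t)) * (\<Sum>h\<le>t. (-1)^h * (W h / C) * (real h - \<mu>))\<bar>"
    using Eh_step[OF jn tn] unfolding W_def C_def \<mu>_def by simp
  also have "\<dots> \<le> \<bar>1 - 2 * real j / real n\<bar> * \<bar>Eh n j t\<bar> + (2 / (real n - real t)) * s"
  proof -
    have "\<bar>(2 / (real n - real t)) * (\<Sum>h\<le>t. (-1)^h * (W h / C) * (real h - \<mu>))\<bar> \<le> (2 / (real n - real t)) * s"
    proof -
      have c0: "2 / (real n - real t) \<ge> 0" using nt by simp
      have "\<bar>(2 / (real n - real t)) * (\<Sum>h\<le>t. (-1)^h * (W h / C) * (real h - \<mu>))\<bar> = (2 / (real n - real t)) * \<bar>(\<Sum>h\<le>t. (-1)^h * (W h / C) * (real h - \<mu>))\<bar>"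
        unfolding abs_mult using c0 by simp
      also have "\<dots> \<le> (2 / (real n - real t)) * s" by (rule mult_left_mono[OF B c0])
      finally show ?thesis .
    qed
    then show ?thesis by (simp add: abs_mult abs_triangle_ineq order_trans[OF abs_triangle_ineq])
  qed
  also have "\<dots> \<le> \<bar>1 - 2 * real j / real n\<bar> * \<bar>Eh n j t\<bar> + 4 / sqrt (real n)"
    using st unfolding s_def by simp
  finally show ?thesis .
qed

lemma E_bound:
  assumes jn: "j \<le> n" and n2: "2 \<le> n" and d1: "\<bar>1 - 2 * real j / real n\<bar> < 1" and t: "2 * t \<le> n"
  shows "\<bar>Eh n j t\<bar> \<le> \<bar>1 - 2 * real j / real n\<bar> ^ (min t 3) + (4 / sqrt (real n)) / (1 - \<bar>1 - 2 * real j / real n\<bar>)"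
  using t
proof (induction t)
  case 0
  have "0 \<le> (4 / sqrt (real n)) / (1 - \<bar>1 - 2 * real j / real n\<bar>)" using d1 by simp
  then show ?case using Eh_0[OF jn] by simp
next
  case (Suc t)
  define d where "d = \<bar>1 - 2 * real j / real n\<bar>"
  define e where "e = 4 / sqrt (real n)"
  have d0: "0 \<le> d" "d < 1" unfolding d_def using d1 by auto
  have IH: "\<bar>Eh n j t\<bar> \<le> d ^ (min t 3) + e / (1 - d)" using Suc by (simp add: d_def e_def)
  have "\<bar>Eh n j (Suc t)\<bar> \<le> d * \<bar>Eh n j t\<bar> + e"
    using step_bound[OF jn n2] Suc.prems unfolding d_def e_def by simp
  also have "\<dots> \<le> d * (d ^ (min t 3) + e / (1 - d)) + e"
    using IH d0 by (simp add: mult_left_mono)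
  also have "\<dots> = d ^ (Suc (min t 3)) + e / (1 - d)"
    using d0 by (simp add: field_simps)
  also have "d ^ (Suc (min t 3)) \<le> d ^ (min (Suc t) 3)"
    by (rule power_decreasing) (use d0 in auto)
  finally show ?case unfolding d_def e_def by simp
qed


lemma kraw_nat: "i \<le> n \<Longrightarrow> kraw n j (real i) = (\<Sum>l=0..j. (-1)^l * real (i choose l) * real ((n - i) choose (j - l)))"
  unfolding kraw_def by (rule sum.cong[OF refl]) (simp add: binomial_gbinomial of_nat_diff)

lemma trinom: "(N choose a) * ((N - a) choose b) = (N choose b) * ((N - b) choose a)"
proof (cases "a + b \<le> N")
  case True
  have 1: "(N choose (a+b)) * ((a+b) choose a) = (N choose a) * ((N - a) choose b)"
    using choose_mult[of a "a+b" N] True by simp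
  have 2: "(N choose (a+b)) * ((a+b) choose b) = (N choose b) * ((N - b) choose a)"
    using choose_mult[of b "a+b" N] True by simp
  have "((a+b) choose a) = ((a+b) choose b)" using binomial_symmetric[of a "a+b"] by simp
  then show ?thesis using 1 2 by simp
next
  case False
  show ?thesis
  proof (cases "a \<le> N \<and> b \<le> N")
    case True
    then have "N - a < b" "N - b < a" using False by linarith+
    then show ?thesis by (simp add: binomial_eq_0)
  next
    case F2: False
    show ?thesis
    proof (cases "a \<le> N")
      case False
      then have "N < a" "N - b < a" by linarith+
      then show ?thesis by (simp add: binomial_eq_0)
    next
      case True
      then have "\<not> b \<le> N" using F2 by simp
      then have "N < b" "N - a < b" by linarith+
      then show ?thesis by (simp add: binomial_eq_0)
    qed
  qed
qed

lemma termwise: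
  assumes "l \<le> i" "l \<le> j" "i \<le> n" "j \<le> n"
  shows "(n choose i) * (i choose l) * ((n - i) choose (j - l)) = (n choose j) * (j choose l) * ((n - j) choose (i - l))"
proof -
  have a: "(n choose i) * (i choose l) = (n choose l) * ((n - l) choose (i - l))" using choose_mult assms by simp
  have b: "(n choose j) * (j choose l) = (n choose l) * ((n - l) choose (j - l))" using choose_mult assms by simp
  have c: "((n - l) choose (i - l)) * ((n - l - (i - l)) choose (j - l)) = ((n - l) choose (j - l)) * ((n - l - (j - l)) choose (i - l))"
    by (rule trinom)
  have d: "n - l - (i - l) = n - i" "n - l - (j - l) = n - j" using assms by auto
  show ?thesis unfolding a b using c unfolding d by (simp add: mult.assoc)
qed

lemma kraw_sym:
  assumes "i \<le> n" "j \<le> n"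
  shows "real (n choose i) * kraw n j (real i) = real (n choose j) * G j (n - j) i"
proof -
  define f where "f l = (-1::real)^l * real (i choose l) * real ((n - i) choose (j - l))" for l
  define g where "g h = (-1::real)^h * real (j choose h) * real ((n - j) choose (i - h))" for h
  have "kraw n j (real i) = (\<Sum>l=0..j. f l)" unfolding f_def using kraw_nat[OF assms(1)] .
  also have "\<dots> = (\<Sum>l\<in>{..min i j}. f l)"
    by (rule sum.mono_neutral_right) (auto simp: f_def)
  finally have 1: "kraw n j (real i) = (\<Sum>l\<in>{..min i j}. f l)" .
  have "G j (n - j) i = (\<Sum>h\<le>i. g h)" unfolding G_def g_def ..
  also have "\<dots> = (\<Sum>h\<in>{..min i j}. g h)"
    by (rule sum.mono_neutral_right) (auto simp: g_def)
  finally have 2: "G j (n - j) i = (\<Sum>h\<in>{..min i j}. g h)" .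
  show ?thesis unfolding 1 2 sum_distrib_left
  proof (rule sum.cong[OF refl])
    fix l assume "l \<in> {..min i j}"
    then have l: "l \<le> i" "l \<le> j" by auto
    have "real (n choose i) * (real (i choose l) * real ((n - i) choose (j - l))) = real (n choose j) * (real (j choose l) * real ((n - j) choose (i - l)))"
      using termwise[OF l assms] by (metis of_nat_mult mult.assoc)
    then show "real (n choose i) * f l = real (n choose j) * g l" unfolding f_def g_def
      by (simp add: algebra_simps)
  qed
qed

lemma kraw_Eh: "i \<le> n \<Longrightarrow> j \<le> n \<Longrightarrow> kraw n j (real i) / real (n choose j) = Eh n j i"
  using kraw_sym[of i n j] by (simp add: Eh_def field_simps)

lemma kraw_refl:
  assumes "i \<le> n"
  shows "kraw n j (real (n - i)) = (-1)^j * kraw n j (real i)"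
proof -
  have ni: "n - (n - i) = i" using assms by simp
  have "kraw n j (real (n - i)) = (\<Sum>l=0..j. (-1)^l * real ((n - i) choose l) * real (i choose (j - l)))"
    using kraw_nat[of "n - i" n j] ni by simp
  also have "\<dots> = (\<Sum>l=0..j. (-1)^(j - l) * real ((n - i) choose (j - l)) * real (i choose (j - (j - l))))"
    by (subst sum.atLeastAtMost_rev) simp
  also have "\<dots> = (\<Sum>l=0..j. (-1)^j * ((-1)^l * real (i choose l) * real ((n - i) choose (j - l))))"
  proof (rule sum.cong[OF refl])
    fix l assume "l \<in> {0..j}"
    then have l: "l \<le> j" by simp
    have "(-1::real)^j = (-1)^(j-l) * (-1)^l" using l by (simp add: power_add[symmetric])
    moreover have "(-1::real)^l * (-1)^l = 1" by (induct l) auto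
    ultimately have "(-1::real)^(j-l) = (-1)^j * (-1)^l"
      by (metis mult.assoc mult.right_neutral)
    then show "(-1)^(j - l) * real ((n - i) choose (j - l)) * real (i choose (j - (j - l))) = (-1)^j * ((-1)^l * real (i choose l) * real ((n - i) choose (j - l)))"
      using l by simp
  qed
  also have "\<dots> = (-1)^j * kraw n j (real i)"
    using kraw_nat[OF assms, of j] by (simp add: sum_distrib_left)
  finally show ?thesis .
qed

lemma choose2_real: "real (x choose 2) = real x * (real x - 1) / 2"
  using KL[of 1 x] by (simp add: numeral_2_eq_2 field_simps)

lemma Eh_1: "j \<le> n \<Longrightarrow> 0 < n \<Longrightarrow> Eh n j 1 = (real n - 2 * real j) / real n"
  by (simp add: Eh_def G_def of_nat_diff field_simps)

lemma Eh_2: "j \<le> n \<Longrightarrow> 2 \<le> n \<Longrightarrow> Eh n j 2 = ((real n - 2 * real j)^2 - real n) / (real n * (real n - 1))"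
  by (simp add: Eh_def G_def numeral_2_eq_2 choose2_real[unfolded numeral_2_eq_2] of_nat_diff field_simps power2_eq_square)


lemma ck_simp:
  fixes k n Q :: real
  assumes n: "n > 0" and k: "k > 0" and Qd: "Q = 2*k*n - n^2 + 2*k + 2 - n" and Q: "Q \<noteq> 0"
  shows "(1 + 2 * (k/n + 1/n)^2 - 2 * (k/n + 1/n) - 1/n) / (2 * (k/n) * (2 * (k/n) - 1 + 1/n * (2 * (k/n) + 2 * (1/n) - 1)))
     = (n^2 + 2*(k+1)^2 - 2*n*(k+1) - n) * n / (2 * k * Q)"
proof -
  have e1: "1 + 2 * (k/n + 1/n)^2 - 2 * (k/n + 1/n) - 1/n = (n^2 + 2*(k+1)^2 - 2*n*(k+1) - n) / n^2"
    using n by (simp add: field_simps power2_eq_square)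
  have e2: "2 * (k/n) - 1 + 1/n * (2 * (k/n) + 2 * (1/n) - 1) = Q / n^2"
    using n unfolding Qd by (simp add: field_simps power2_eq_square)
  show ?thesis unfolding e1 e2 using n k Q by (simp add: field_simps power2_eq_square)
qed

lemma ck1_simp:
  fixes k n Q :: real
  assumes n: "n > 0" and Qd: "Q = 2*k*n - n^2 + 2*k + 2 - n" and Q: "Q \<noteq> 0"
  shows "(1 - k/n) / (2 * (k/n) - 1 + 1/n * (2 * (k/n) + 2 * (1/n) - 1)) = (n - k) * n / Q"
proof -
  have e2: "2 * (k/n) - 1 + 1/n * (2 * (k/n) + 2 * (1/n) - 1) = Q / n^2"
    using n unfolding Qd by (simp add: field_simps power2_eq_square)
  show ?thesis unfolding e2 using n Q by (simp add: field_simps power2_eq_square)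
qed

lemma exact_n:
  fixes k n Q :: real
  assumes n: "n > 0" and k: "k > 0" and Qd: "Q = 2*k*n - n^2 + 2*k + 2 - n" and Q: "Q \<noteq> 0"
  shows "(n^2 + 2*(k+1)^2 - 2*n*(k+1) - n) * n / (2 * k * Q) * ((n - 2*k)/n - 1)
       + (n - k) * n / Q * ((n - 2*(k+1))/n + 1) = -1"
proof -
  have "(n^2 + 2*(k+1)^2 - 2*n*(k+1) - n) * n / (2 * k * Q) * ((n - 2*k)/n - 1)
       + (n - k) * n / Q * ((n - 2*(k+1))/n + 1) = (- (n^2 + 2*(k+1)^2 - 2*n*(k+1) - n) + (n - k) * (2*n - 2*k - 2)) / Q"
    using n k Q by (simp add: field_simps)
  also have "\<dots> = -1" using Q unfolding Qd by (simp add: field_simps power2_eq_square)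
  finally show ?thesis .
qed

lemma br: "(n::real) > 1 \<Longrightarrow> b / n - c / (n * (n - 1)) = (b * (n - 1) - c) / (n * (n - 1))"
  by (simp add: field_simps)

lemma comb2: "(n::real) > 1 \<Longrightarrow> k > 0 \<Longrightarrow> Q \<noteq> 0 \<Longrightarrow> P * n / (2 * k * Q) * (X / (n * (n - 1))) + R * n / Q * (Y / (n * (n - 1)))
   = (P * X + 2 * k * R * Y) / (2 * k * Q * (n - 1))"
proof -
  assume n: "n > 1" and k: "k > 0" and Q: "Q \<noteq> 0"
  have n0: "n \<noteq> 0" "n - 1 \<noteq> 0" using n by auto
  have a: "P * n / (2 * k * Q) * (X / (n * (n - 1))) = P * X / (2 * k * Q * (n - 1))"
  proof -
    have "P * n / (2 * k * Q) * (X / (n * (n - 1))) = (n * (P * X)) / (n * (2 * k * Q * (n - 1)))"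
      by (simp only: times_divide_times_eq mult_ac)
    also have "\<dots> = P * X / (2 * k * Q * (n - 1))" by (rule nonzero_mult_divide_mult_cancel_left[OF n0(1)])
    finally show ?thesis .
  qed
  have b: "R * n / Q * (Y / (n * (n - 1))) = 2 * k * R * Y / (2 * k * Q * (n - 1))"
  proof -
    have "R * n / Q * (Y / (n * (n - 1))) = (n * (R * Y)) / (n * (Q * (n - 1)))"
      by (simp only: times_divide_times_eq mult_ac)
    also have "\<dots> = (R * Y) / (Q * (n - 1))" by (rule nonzero_mult_divide_mult_cancel_left[OF n0(1)])
    also have "\<dots> = (2 * k * (R * Y)) / (2 * k * (Q * (n - 1)))"
      by (rule nonzero_mult_divide_mult_cancel_left[symmetric]) (use k in simp)
    also have "\<dots> = 2 * k * R * Y / (2 * k * Q * (n - 1))" by (simp only: mult_ac)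
    finally show ?thesis .
  qed
  show ?thesis unfolding a b by (simp add: add_divide_distrib)
qed

lemma exact_2:
  fixes k n Q :: real
  assumes n: "n > 1" and k: "k > 0" and Qd: "Q = 2*k*n - n^2 + 2*k + 2 - n" and Q: "Q \<noteq> 0"
  shows "(n^2 + 2*(k+1)^2 - 2*n*(k+1) - n) * n / (2 * k * Q) * ((n - 2*k)/n - ((n - 2*k)^2 - n) / (n * (n - 1)))
       + (n - k) * n / Q * ((n - 2*(k+1))/n - ((n - 2*(k+1))^2 - n) / (n * (n - 1))) = -1"
proof -
  have n1: "n - 1 \<noteq> 0" using n by simp
  have "(n^2 + 2*(k+1)^2 - 2*n*(k+1) - n) * n / (2 * k * Q) * ((n - 2*k)/n - ((n - 2*k)^2 - n) / (n * (n - 1)))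
       + (n - k) * n / Q * ((n - 2*(k+1))/n - ((n - 2*(k+1))^2 - n) / (n * (n - 1)))
     = ((n^2 + 2*(k+1)^2 - 2*n*(k+1) - n) * ((n - 2*k) * (n - 1) - ((n - 2*k)^2 - n))
        + 2 * k * (n - k) * ((n - 2*(k+1)) * (n - 1) - ((n - 2*(k+1))^2 - n))) / (2 * k * Q * (n - 1))"
    unfolding br[OF n] by (rule comb2[OF n k Q])
  also have "\<dots> = -1"
  proof -
    have "(n^2 + 2*(k+1)^2 - 2*n*(k+1) - n) * ((n - 2*k) * (n - 1) - ((n - 2*k)^2 - n))
        + 2 * k * (n - k) * ((n - 2*(k+1)) * (n - 1) - ((n - 2*(k+1))^2 - n)) = - (2 * k * Q * (n - 1))"
      unfolding Qd by (simp add: algebra_simps power2_eq_square)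
    moreover have "2 * k * Q * (n - 1) \<noteq> 0" using k Q n1 by simp
    ultimately show ?thesis by simp
  qed
  finally show ?thesis .
qed


lemma d_lt1: "0 < j \<Longrightarrow> j < n \<Longrightarrow> \<bar>1 - 2 * real j / real n\<bar> < 1"
  by (auto simp: abs_less_iff field_simps)

lemma Eh_mid_bound:
  assumes "0 < j" "j < n" "3 \<le> i" "i + 3 \<le> n"
  shows "\<bar>Eh n j i\<bar> \<le> \<bar>1 - 2 * real j / real n\<bar> ^ 3 + (4 / sqrt (real n)) / (1 - \<bar>1 - 2 * real j / real n\<bar>)"
proof -
  have jn: "j \<le> n" and n2: "2 \<le> n" using assms by auto
  note d = d_lt1[OF assms(1,2)]
  show ?thesis
  proof (cases "2 * i \<le> n")
    case True
    show ?thesis using E_bound[OF jn n2 d True] assms by simp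
  next
    case False
    define i' where "i' = n - i"
    have i': "2 * i' \<le> n" "3 \<le> i'" "i' \<le> n" using False assms unfolding i'_def by auto
    have ii: "i = n - i'" unfolding i'_def using assms by simp
    have "Eh n j i = kraw n j (real (n - i')) / real (n choose j)" using kraw_Eh[of i n j] assms ii by simp
    also have "\<dots> = (-1)^j * (kraw n j (real i') / real (n choose j))" using kraw_refl[OF i'(3)] by simp
    also have "\<dots> = (-1)^j * Eh n j i'" using kraw_Eh[OF i'(3) jn] by simp
    finally have "\<bar>Eh n j i\<bar> = \<bar>Eh n j i'\<bar>" by (simp add: abs_mult)
    then show ?thesis using E_bound[OF jn n2 d i'(1)] i' by simp
  qed
qed

lemma sum_two:
  fixes f x :: "nat \<Rightarrow> real"
  assumes "1 \<le> k" "k + 1 \<le> n" "\<And>m. m \<noteq> k \<Longrightarrow> m \<noteq> k + 1 \<Longrightarrow> x m = 0"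
  shows "(\<Sum>m=1..n. f m * x m) = f k * x k + f (k+1) * x (k+1)"
proof -
  have "(\<Sum>m=1..n. f m * x m) = (\<Sum>m\<in>{k, k+1}. f m * x m)"
    by (rule sum.mono_neutral_right) (use assms in auto)
  then show ?thesis by simp
qed

definition e1 :: "nat \<Rightarrow> nat \<Rightarrow> real" where "e1 n j = (real n - 2 * real j) / real n"
definition e2 :: "nat \<Rightarrow> nat \<Rightarrow> real" where "e2 n j = ((real n - 2 * real j)^2 - real n) / (real n * (real n - 1))"
definition Bd :: "nat \<Rightarrow> nat \<Rightarrow> real" where
  "Bd n j = \<bar>1 - 2 * real j / real n\<bar> ^ 3 + (4 / sqrt (real n)) / (1 - \<bar>1 - 2 * real j / real n\<bar>)"

lemma feasible_generic:
  fixes x :: "nat \<Rightarrow> real" and ck ck1 :: real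
  assumes k1: "2 \<le> k" and kn: "k + 3 \<le> n" and ev: "even k"
    and xk: "x k = ck / real (n choose k)" and xk1: "x (k+1) = ck1 / real (n choose (k+1))"
    and x0: "\<And>m. m \<noteq> k \<Longrightarrow> m \<noteq> k + 1 \<Longrightarrow> x m = 0"
    and c0: "ck \<ge> 0" "ck1 \<ge> 0"
    and H2: "ck * (e1 n k - e2 n k) + ck1 * (e1 n (k+1) - e2 n (k+1)) \<ge> -1"
    and Hn: "ck * (e1 n k - 1) + ck1 * (e1 n (k+1) + 1) \<ge> -1"
    and H3: "ck1 * (2 * e1 n (k+1)) \<ge> -1"
    and H4: "ck * (e1 n k - e2 n k) + ck1 * (e1 n (k+1) + e2 n (k+1)) \<ge> -1"
    and H5: "ck * e1 n k + ck1 * e1 n (k+1) - ck * Bd n k - ck1 * Bd n (k+1) \<ge> -1"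
  shows "lp_feasible n x"
  unfolding lp_feasible_def
proof (intro conjI ballI)
  fix m assume "m \<in> {1..n}"
  then show "x m \<ge> 0"
  proof -
    have "x k \<ge> 0" "x (k+1) \<ge> 0" unfolding xk xk1 using c0 by auto
    then show ?thesis using x0[of m] by (cases "m = k"; cases "m = k + 1") auto
  qed
next
  fix i assume "i \<in> {2..n}"
  then have i: "2 \<le> i" "i \<le> n" by auto
  have n2: "2 \<le> n" using kn by simp
  define E where "E j i = Eh n j i" for j i
  have kr: "kraw n j (real i) = real (n choose j) * E j i" if "j \<le> n" "i \<le> n" for j i
    using kraw_Eh[OF that(2) that(1)] that unfolding E_def by (simp add: field_simps)
  have kr1: "kraw n j 1 = real (n choose j) * E j 1" if "j \<le> n" for j
    using kr[OF that, of 1] n2 by simp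
  have Ck: "real (n choose k) > 0" "real (n choose (k+1)) > 0" using kn by auto
  have "(\<Sum>m=1..n. (kraw n m 1 - kraw n m (real i)) * x m)
      = (kraw n k 1 - kraw n k (real i)) * x k + (kraw n (k+1) 1 - kraw n (k+1) (real i)) * x (k+1)"
    by (rule sum_two) (use k1 kn x0 in auto)
  also have "\<dots> = ck * (E k 1 - E k i) + ck1 * (E (k+1) 1 - E (k+1) i)"
    unfolding xk xk1 using kr[of k i] kr[of "k+1" i] kr1[of k] kr1[of "k+1"] kn i Ck
    by (simp add: field_simps)
  finally have S: "(\<Sum>m=1..n. (kraw n m 1 - kraw n m (real i)) * x m) = ck * (E k 1 - E k i) + ck1 * (E (k+1) 1 - E (k+1) i)" .
  have Ej1: "E j 1 = e1 n j" if "j \<le> n" for j unfolding E_def e1_def using Eh_1[OF that] n2 by simp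
  have Ej2: "E j 2 = e2 n j" if "j \<le> n" for j unfolding E_def e2_def using Eh_2[OF that n2] by simp
  have refl: "E j (n - i') = (-1)^j * E j i'" if "j \<le> n" "i' \<le> n" for j i'
  proof -
    have "E j (n - i') = kraw n j (real (n - i')) / real (n choose j)" unfolding E_def using kraw_Eh[of "n-i'" n j] that by simp
    also have "\<dots> = (-1)^j * (kraw n j (real i') / real (n choose j))" using kraw_refl[OF that(2)] by simp
    also have "\<dots> = (-1)^j * E j i'" unfolding E_def using kraw_Eh[OF that(2,1)] by simp
    finally show ?thesis .
  qed
  have E0: "E j 0 = 1" if "j \<le> n" for j unfolding E_def using Eh_0[OF that] .
  have evk1: "odd (k+1)" using ev by simp
  have kle: "k \<le> n" "k + 1 \<le> n" using kn by auto
  have "ck * (E k 1 - E k i) + ck1 * (E (k+1) 1 - E (k+1) i) \<ge> -1"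
  proof -
    consider "i = 2" | "i = n" | "i = n - 1" | "i = n - 2" | "3 \<le> i \<and> i + 3 \<le> n"
      using i kn by linarith
    then show ?thesis
    proof cases
      case 1 then show ?thesis using H2 Ej1 Ej2 kle by simp
    next
      case 2
      have "E k n = 1" "E (k+1) n = -1" using refl[of k 0] refl[of "k+1" 0] E0 kle ev evk1 by simp_all
      then show ?thesis using Hn Ej1 kle 2 by simp
    next
      case 3
      have "E k i = E k 1" "E (k+1) i = - E (k+1) 1" using refl[of k 1] refl[of "k+1" 1] kle ev evk1 3 n2 by simp_all
      then show ?thesis using H3 Ej1[of "k+1"] Ej1[of k] kle by (simp add: algebra_simps)
    next
      case 4
      have "E k i = E k 2" "E (k+1) i = - E (k+1) 2" using refl[of k 2] refl[of "k+1" 2] kle ev evk1 4 n2 by simp_all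
      then show ?thesis using H4 Ej1[of "k+1"] Ej1[of k] Ej2[of "k+1"] Ej2[of k] kle by (simp add: algebra_simps)
    next
      case 5
      have b1: "\<bar>E k i\<bar> \<le> Bd n k" unfolding E_def Bd_def by (rule Eh_mid_bound) (use 5 k1 kn in auto)
      have b2: "\<bar>E (k+1) i\<bar> \<le> Bd n (k+1)" unfolding E_def Bd_def by (rule Eh_mid_bound) (use 5 k1 kn in auto)
      have "ck * E k i \<le> ck * Bd n k" using b1 c0 by (meson abs_le_D1 mult_left_mono)
      moreover have "ck1 * E (k+1) i \<le> ck1 * Bd n (k+1)" using b2 c0 by (meson abs_le_D1 mult_left_mono)
      ultimately show ?thesis using H5 Ej1[of "k+1"] Ej1[of k] kle by (simp add: algebra_simps)
    qed
  qed
  then show "(\<Sum>m=1..n. (kraw n m 1 - kraw n m (real i)) * x m) \<ge> -1" unfolding S .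
qed


lemma kidx_facts:
  assumes "\<beta> \<ge> 0"
  shows "real (kidx \<beta> n) \<le> \<beta> * real n" "\<beta> * real n - 2 < real (kidx \<beta> n)" "even (kidx \<beta> n)"
proof -
  define f where "f = \<lfloor>\<beta> * real n / 2\<rfloor>"
  have f0: "f \<ge> 0" unfolding f_def using assms by simp
  have k: "kidx \<beta> n = 2 * nat f" unfolding kidx_def f_def[symmetric] using f0 by (simp add: nat_mult_distrib)
  have rk: "real (kidx \<beta> n) = 2 * real_of_int f" unfolding k using f0 by simp
  have "real_of_int f \<le> \<beta> * real n / 2" "\<beta> * real n / 2 < real_of_int f + 1" unfolding f_def by linarith+
  then show "real (kidx \<beta> n) \<le> \<beta> * real n" "\<beta> * real n - 2 < real (kidx \<beta> n)" unfolding rk by linarith+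
  show "even (kidx \<beta> n)" unfolding k by simp
qed

lemma ev_real_ge: "eventually (\<lambda>n. c \<le> real n) sequentially"
  using filterlim_real_sequentially unfolding filterlim_at_top by blast

lemma r_lim:
  assumes "\<beta> \<ge> 0"
  shows "(\<lambda>n. real (kidx \<beta> n) / real n) \<longlonglongrightarrow> \<beta>"
proof (rule real_tendsto_sandwich)
  show "eventually (\<lambda>n. \<beta> - 2 / real n \<le> real (kidx \<beta> n) / real n) sequentially"
    using ev_real_ge[of 1]
  proof eventually_elim
    case (elim n)
    then have n: "real n > 0" by simp
    have "\<beta> - 2 / real n = (\<beta> * real n - 2) / real n" using n by (simp add: field_simps)
    also have "\<dots> \<le> real (kidx \<beta> n) / real n"
      by (rule divide_right_mono) (use kidx_facts(2)[OF assms, of n] n in auto)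
    finally show ?case .
  qed
  show "eventually (\<lambda>n. real (kidx \<beta> n) / real n \<le> \<beta>) sequentially"
    using ev_real_ge[of 1]
  proof eventually_elim
    case (elim n)
    then have n: "real n > 0" by simp
    show ?case using kidx_facts(1)[OF assms, of n] n by (simp add: field_simps)
  qed
  show "(\<lambda>n. \<beta> - 2 / real n) \<longlonglongrightarrow> \<beta>"
    by (rule tendsto_eq_intros lim_const_over_n refl)+ simp
  show "(\<lambda>n. \<beta>) \<longlonglongrightarrow> \<beta>" by simp
qed

lemma t_lim: "(\<lambda>n. 1 / real n) \<longlonglongrightarrow> 0"
  by (rule lim_const_over_n)

lemma s_lim: "(\<lambda>n. 4 / sqrt (real n)) \<longlonglongrightarrow> 0"
proof -
  have "filterlim (\<lambda>n. sqrt (real n)) at_top sequentially"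
    by (rule filterlim_compose[OF sqrt_at_top filterlim_real_sequentially])
  then have "(\<lambda>n. inverse (sqrt (real n))) \<longlonglongrightarrow> 0" by (rule tendsto_inverse_0_at_top)
  from tendsto_mult[OF tendsto_const[of 4] this] show ?thesis by (simp add: divide_inverse)
qed


lemma main_beta:
  fixes a \<beta> :: real
  assumes b1: "1/2 < \<beta>" and b2: "\<beta> < 1"
  shows "eventually (\<lambda>n. lp_feasible n (xstar \<beta> n)) sequentially
    \<and> ((\<lambda>n. lp_objective n a (xstar \<beta> n)) \<longlonglongrightarrow> bound_fun a \<beta>)"
proof -
  have b0: "\<beta> \<ge> 0" using b1 by simp
  define k where "k n = kidx \<beta> n" for n
  define r where "r n = real (k n) / real n" for n
  define t where "t n = 1 / real n" for n :: nat
  define s where "s n = 4 / sqrt (real n)" for n :: nat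
  define D where "D n = 2 * r n - 1 + t n * (2 * r n + 2 * t n - 1)" for n
  define ck where "ck n = (1 + 2 * (r n + t n)^2 - 2 * (r n + t n) - t n) / (2 * r n * D n)" for n
  define ck1 where "ck1 n = (1 - r n) / D n" for n
  define Ck where "Ck = (1 + 2 * \<beta>^2 - 2 * \<beta>) / (2 * \<beta> * (2 * \<beta> - 1))"
  define Ck1 where "Ck1 = (1 - \<beta>) / (2 * \<beta> - 1)"
  have rL: "r \<longlonglongrightarrow> \<beta>" unfolding r_def k_def by (rule r_lim[OF b0])
  have tL: "t \<longlonglongrightarrow> 0" unfolding t_def by (rule t_lim)
  have sL: "s \<longlonglongrightarrow> 0" unfolding s_def by (rule s_lim)
  have DL: "D \<longlonglongrightarrow> 2 * \<beta> - 1"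
  proof -
    have "D \<longlonglongrightarrow> 2 * \<beta> - 1 + 0 * (2 * \<beta> + 2 * 0 - 1)"
      unfolding D_def[abs_def] by (intro tendsto_intros rL tL)
    then show ?thesis by simp
  qed
  have ckL: "ck \<longlonglongrightarrow> Ck"
  proof -
    have "ck \<longlonglongrightarrow> (1 + 2 * (\<beta> + 0)^2 - 2 * (\<beta> + 0) - 0) / (2 * \<beta> * (2 * \<beta> - 1))"
      unfolding ck_def[abs_def] by (intro tendsto_intros rL tL DL) (use b1 in simp)
    then show ?thesis unfolding Ck_def by simp
  qed
  have ck1L: "ck1 \<longlonglongrightarrow> Ck1"
    unfolding ck1_def[abs_def] Ck1_def by (intro tendsto_intros rL tL DL) (use b1 in simp)
  have Ck_pos: "Ck > 0"
  proof -
    have e: "1 + 2 * \<beta>^2 - 2 * \<beta> = \<beta>^2 + (1 - \<beta>)^2" by (simp add: power2_eq_square algebra_simps)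
    have "\<beta>^2 > 0" using b1 by simp
    then have "1 + 2 * \<beta>^2 - 2 * \<beta> > 0" unfolding e by (simp add: add_pos_nonneg)
    moreover have "2 * \<beta> * (2 * \<beta> - 1) > 0" using b1 by simp
    ultimately show ?thesis unfolding Ck_def by simp
  qed
  have Ck1_pos: "Ck1 > 0" unfolding Ck1_def using b1 b2 by simp
  have Csum: "Ck + Ck1 = 1 / (2 * \<beta> * (2 * \<beta> - 1))"
    unfolding Ck_def Ck1_def using b1 by (simp add: field_simps power2_eq_square)
  have ev2: "eventually (\<lambda>n. 2 \<le> real n) sequentially" by (rule ev_real_ge)
  have e1k: "eventually (\<lambda>n. e1 n (k n) = 1 - 2 * r n) sequentially"
    using ev2 by eventually_elim (simp add: e1_def r_def field_simps)
  have e1k1: "eventually (\<lambda>n. e1 n (k n + 1) = 1 - 2 * (r n + t n)) sequentially"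
    using ev2 by eventually_elim (simp add: e1_def r_def t_def field_simps)
  have e2k: "eventually (\<lambda>n. e2 n (k n) = ((1 - 2 * r n)^2 - t n) / (1 - t n)) sequentially"
    using ev2 by eventually_elim (simp add: e2_def r_def t_def field_simps power2_eq_square)
  have e2k1: "eventually (\<lambda>n. e2 n (k n + 1) = ((1 - 2 * (r n + t n))^2 - t n) / (1 - t n)) sequentially"
    using ev2 by eventually_elim (simp add: e2_def r_def t_def field_simps power2_eq_square)
  have Bk: "eventually (\<lambda>n. Bd n (k n) = \<bar>1 - 2 * r n\<bar>^3 + s n / (1 - \<bar>1 - 2 * r n\<bar>)) sequentially"
    using ev2 by eventually_elim (simp add: Bd_def r_def s_def)
  have Bk1: "eventually (\<lambda>n. Bd n (k n + 1) = \<bar>1 - 2 * (r n + t n)\<bar>^3 + s n / (1 - \<bar>1 - 2 * (r n + t n)\<bar>)) sequentially"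
    using ev2 by eventually_elim (simp add: Bd_def r_def s_def t_def add_divide_distrib algebra_simps)
  have e1kL: "(\<lambda>n. e1 n (k n)) \<longlonglongrightarrow> 1 - 2 * \<beta>"
  proof -
    have "(\<lambda>n. 1 - 2 * r n) \<longlonglongrightarrow> 1 - 2 * \<beta>" by (intro tendsto_intros rL)
    then show ?thesis by (rule iffD2[OF tendsto_cong[OF e1k]])
  qed
  have e1k1L: "(\<lambda>n. e1 n (k n + 1)) \<longlonglongrightarrow> 1 - 2 * \<beta>"
  proof -
    have "(\<lambda>n. 1 - 2 * (r n + t n)) \<longlonglongrightarrow> 1 - 2 * (\<beta> + 0)" by (intro tendsto_intros rL tL)
    then show ?thesis using iffD2[OF tendsto_cong[OF e1k1]] by simp
  qed
  have e2kL: "(\<lambda>n. e2 n (k n)) \<longlonglongrightarrow> (1 - 2 * \<beta>)^2"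
  proof -
    have "(\<lambda>n. ((1 - 2 * r n)^2 - t n) / (1 - t n)) \<longlonglongrightarrow> ((1 - 2 * \<beta>)^2 - 0) / (1 - 0)"
      by (rule tendsto_divide, intro tendsto_intros rL tL, intro tendsto_intros tL, simp)
    then show ?thesis using iffD2[OF tendsto_cong[OF e2k]] by simp
  qed
  have e2k1L: "(\<lambda>n. e2 n (k n + 1)) \<longlonglongrightarrow> (1 - 2 * \<beta>)^2"
  proof -
    have "(\<lambda>n. ((1 - 2 * (r n + t n))^2 - t n) / (1 - t n)) \<longlonglongrightarrow> ((1 - 2 * (\<beta> + 0))^2 - 0) / (1 - 0)"
      by (rule tendsto_divide, intro tendsto_intros rL tL, intro tendsto_intros tL, simp)
    then show ?thesis using iffD2[OF tendsto_cong[OF e2k1]] by simp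
  qed
  have abs_b: "\<bar>1 - 2 * \<beta>\<bar> = 2 * \<beta> - 1" using b1 by simp
  have BkL: "(\<lambda>n. Bd n (k n)) \<longlonglongrightarrow> (2 * \<beta> - 1)^3"
  proof -
    have "(\<lambda>n. \<bar>1 - 2 * r n\<bar>^3 + s n / (1 - \<bar>1 - 2 * r n\<bar>)) \<longlonglongrightarrow> \<bar>1 - 2 * \<beta>\<bar>^3 + 0 / (1 - \<bar>1 - 2 * \<beta>\<bar>)"
      by (rule tendsto_add, intro tendsto_intros rL, rule tendsto_divide, rule sL, intro tendsto_intros rL, use abs_b b2 in simp)
    then show ?thesis using iffD2[OF tendsto_cong[OF Bk]] abs_b by simp
  qed
  have Bk1L: "(\<lambda>n. Bd n (k n + 1)) \<longlonglongrightarrow> (2 * \<beta> - 1)^3"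
  proof -
    have "(\<lambda>n. \<bar>1 - 2 * (r n + t n)\<bar>^3 + s n / (1 - \<bar>1 - 2 * (r n + t n)\<bar>)) \<longlonglongrightarrow> \<bar>1 - 2 * (\<beta> + 0)\<bar>^3 + 0 / (1 - \<bar>1 - 2 * (\<beta> + 0)\<bar>)"
      by (rule tendsto_add, intro tendsto_intros rL tL, rule tendsto_divide, rule sL, intro tendsto_intros rL tL, use abs_b b2 in simp)
    then show ?thesis using iffD2[OF tendsto_cong[OF Bk1]] abs_b by simp
  qed
  have L3: "Ck1 * (2 * (1 - 2 * \<beta>)) > -1"
  proof -
    have "Ck1 * (2 * (1 - 2 * \<beta>)) = -2 * (1 - \<beta>)" unfolding Ck1_def using b1 by (simp add: field_simps)
    then show ?thesis using b1 by simp
  qed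
  have L4: "Ck * ((1 - 2 * \<beta>) - (1 - 2 * \<beta>)^2) + Ck1 * ((1 - 2 * \<beta>) + (1 - 2 * \<beta>)^2) > -1"
  proof -
    have "Ck * ((1 - 2 * \<beta>) - (1 - 2 * \<beta>)^2) + Ck1 * ((1 - 2 * \<beta>) + (1 - 2 * \<beta>)^2) = -3 + 6 * \<beta> - 4 * \<beta>^2"
    proof -
      have nz: "2 * \<beta> - 1 \<noteq> 0" "\<beta> \<noteq> 0" using b1 by auto
      have a1: "(1 - 2 * \<beta>) - (1 - 2 * \<beta>)^2 = - ((2 * \<beta> - 1) * (2 * \<beta>))" by (simp add: power2_eq_square algebra_simps)
      have a2: "(1 - 2 * \<beta>) + (1 - 2 * \<beta>)^2 = - ((2 * \<beta> - 1) * (2 - 2 * \<beta>))" by (simp add: power2_eq_square algebra_simps)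
      have c1: "Ck * (- ((2 * \<beta> - 1) * (2 * \<beta>))) = - (1 + 2 * \<beta>^2 - 2 * \<beta>)" unfolding Ck_def using nz by (simp add: field_simps)
      have c2: "Ck1 * (- ((2 * \<beta> - 1) * (2 - 2 * \<beta>))) = - ((1 - \<beta>) * (2 - 2 * \<beta>))" unfolding Ck1_def using nz by (simp add: field_simps)
      show ?thesis unfolding a1 a2 c1 c2 by (simp add: power2_eq_square algebra_simps)
    qed
    moreover have "-3 + 6 * \<beta> - 4 * \<beta>^2 > -1"
    proof -
      have "-3 + 6 * \<beta> - 4 * \<beta>^2 + 1 = 2 * (2 * \<beta> - 1) * (1 - \<beta>)" by (simp add: power2_eq_square algebra_simps)
      moreover have "2 * (2 * \<beta> - 1) * (1 - \<beta>) > 0" using b1 b2 by simp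
      ultimately show ?thesis by linarith
    qed
    ultimately show ?thesis by simp
  qed
  have L5: "Ck * (1 - 2 * \<beta>) + Ck1 * (1 - 2 * \<beta>) - Ck * (2 * \<beta> - 1)^3 - Ck1 * (2 * \<beta> - 1)^3 > -1"
  proof -
    have "Ck * (1 - 2 * \<beta>) + Ck1 * (1 - 2 * \<beta>) - Ck * (2 * \<beta> - 1)^3 - Ck1 * (2 * \<beta> - 1)^3
        = - (Ck + Ck1) * (2 * \<beta> - 1) * (1 + (2 * \<beta> - 1)^2)" by (simp add: algebra_simps power2_eq_square power3_eq_cube)
    also have "\<dots> = - (1 + (2 * \<beta> - 1)^2) / (2 * \<beta>)" unfolding Csum using b1 by (simp add: field_simps)
    finally have e: "Ck * (1 - 2 * \<beta>) + Ck1 * (1 - 2 * \<beta>) - Ck * (2 * \<beta> - 1)^3 - Ck1 * (2 * \<beta> - 1)^3 = - (1 + (2 * \<beta> - 1)^2) / (2 * \<beta>)" .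
    have "(2 * \<beta> - 1)^2 < 2 * \<beta> - 1"
    proof -
      have "(2 * \<beta> - 1) * (2 * \<beta> - 1) < 1 * (2 * \<beta> - 1)" by (rule mult_strict_right_mono) (use b1 b2 in auto)
      then show ?thesis by (simp add: power2_eq_square)
    qed
    then have "1 + (2 * \<beta> - 1)^2 < 2 * \<beta>" by simp
    then have "(1 + (2 * \<beta> - 1)^2) / (2 * \<beta>) < 1" using b1 by simp
    moreover have "- (1 + (2 * \<beta> - 1)^2) / (2 * \<beta>) = - ((1 + (2 * \<beta> - 1)^2) / (2 * \<beta>))" by (rule minus_divide_left[symmetric])
    ultimately show ?thesis unfolding e by linarith
  qed
  have evH3: "eventually (\<lambda>n. ck1 n * (2 * e1 n (k n + 1)) > -1) sequentially"
    by (rule order_tendstoD(1)[OF _ L3]) (intro tendsto_intros ck1L e1k1L)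
  have evH4: "eventually (\<lambda>n. ck n * (e1 n (k n) - e2 n (k n)) + ck1 n * (e1 n (k n + 1) + e2 n (k n + 1)) > -1) sequentially"
    by (rule order_tendstoD(1)[OF _ L4]) (intro tendsto_intros ckL ck1L e1kL e1k1L e2kL e2k1L)
  have evH5: "eventually (\<lambda>n. ck n * e1 n (k n) + ck1 n * e1 n (k n + 1) - ck n * Bd n (k n) - ck1 n * Bd n (k n + 1) > -1) sequentially"
    by (rule order_tendstoD(1)[OF _ L5]) (intro tendsto_intros ckL ck1L e1kL e1k1L BkL Bk1L)
  have evck: "eventually (\<lambda>n. ck n > 0) sequentially" by (rule order_tendstoD(1)[OF ckL Ck_pos])
  have evck1: "eventually (\<lambda>n. ck1 n > 0) sequentially" by (rule order_tendstoD(1)[OF ck1L Ck1_pos])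
  have evD: "eventually (\<lambda>n. D n > 0) sequentially" by (rule order_tendstoD(1)[OF DL]) (use b1 in simp)
  have evN1: "eventually (\<lambda>n. 4 / \<beta> \<le> real n) sequentially" by (rule ev_real_ge)
  have evN2: "eventually (\<lambda>n. 3 / (1 - \<beta>) \<le> real n) sequentially" by (rule ev_real_ge)
  have evK: "eventually (\<lambda>n. 2 \<le> k n \<and> k n + 3 \<le> n \<and> 2 \<le> n) sequentially"
    using evN1 evN2 ev2
  proof eventually_elim
    case (elim n)
    have "4 \<le> \<beta> * real n" using elim(1) b1 by (simp add: field_simps)
    then have "2 < real (k n)" using kidx_facts(2)[OF b0, of n] unfolding k_def by linarith
    moreover have "3 \<le> (1 - \<beta>) * real n" using elim(2) b2 by (simp add: field_simps)
    then have "real (k n) + 3 \<le> real n" using kidx_facts(1)[OF b0, of n] unfolding k_def by (simp add: algebra_simps)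
    ultimately show ?case using elim(3) by simp
  qed
  have xs: "xstar \<beta> n m = (if m = k n then ck n / real (n choose k n) else if m = k n + 1 then ck1 n / real (n choose (k n + 1)) else 0)" for n m
    unfolding xstar_def Let_def ck_def ck1_def D_def r_def t_def k_def
    by (simp add: divide_divide_eq_left mult_ac)
  have feas: "eventually (\<lambda>n. lp_feasible n (xstar \<beta> n)) sequentially"
    using evK evck evck1 evD evH3 evH4 evH5
  proof eventually_elim
    case (elim n)
    have kk: "2 \<le> k n" "k n + 3 \<le> n" "2 \<le> n" using elim(1) by auto
    have ev: "even (k n)" unfolding k_def by (rule kidx_facts(3)[OF b0])
    define K where "K = real (k n)"
    define N where "N = real n"
    define Q where "Q = 2*K*N - N^2 + 2*K + 2 - N"
    have N1: "N > 1" "N > 0" unfolding N_def using kk by auto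
    have K0: "K > 0" unfolding K_def using kk by auto
    have QD: "Q = D n * N^2" unfolding Q_def D_def r_def t_def K_def N_def using N1 unfolding N_def
      by (simp add: field_simps power2_eq_square)
    have Q0: "Q \<noteq> 0" using QD elim(4) N1 by simp
    have cks: "ck n = (N^2 + 2*(K+1)^2 - 2*N*(K+1) - N) * N / (2 * K * Q)"
      unfolding ck_def D_def r_def t_def K_def[symmetric] N_def[symmetric] by (rule ck_simp[OF N1(2) K0 Q_def Q0])
    have ck1s: "ck1 n = (N - K) * N / Q"
      unfolding ck1_def D_def r_def t_def K_def[symmetric] N_def[symmetric] by (rule ck1_simp[OF N1(2) Q_def Q0])
    have ee: "e1 n (k n) = (N - 2*K)/N" "e1 n (k n + 1) = (N - 2*(K+1))/N"
       "e2 n (k n) = ((N - 2*K)^2 - N) / (N * (N - 1))" "e2 n (k n + 1) = ((N - 2*(K+1))^2 - N) / (N * (N - 1))"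
      unfolding e1_def e2_def K_def N_def by (simp_all add: algebra_simps)
    show ?case
    proof (rule feasible_generic[OF kk(1,2) ev])
      show "xstar \<beta> n (k n) = ck n / real (n choose k n)" by (simp add: xs)
      show "xstar \<beta> n (k n + 1) = ck1 n / real (n choose (k n + 1))" by (simp add: xs)
      show "\<And>m. m \<noteq> k n \<Longrightarrow> m \<noteq> k n + 1 \<Longrightarrow> xstar \<beta> n m = 0" by (simp add: xs)
      show "ck n \<ge> 0" "ck1 n \<ge> 0" using elim by auto
      show "ck n * (e1 n (k n) - e2 n (k n)) + ck1 n * (e1 n (k n + 1) - e2 n (k n + 1)) \<ge> -1"
        unfolding cks ck1s ee using exact_2[OF N1(1) K0 Q_def Q0] by simp
      show "ck n * (e1 n (k n) - 1) + ck1 n * (e1 n (k n + 1) + 1) \<ge> -1"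
        unfolding cks ck1s ee using exact_n[OF N1(2) K0 Q_def Q0] by simp
      show "ck1 n * (2 * e1 n (k n + 1)) \<ge> -1" using elim by simp
      show "ck n * (e1 n (k n) - e2 n (k n)) + ck1 n * (e1 n (k n + 1) + e2 n (k n + 1)) \<ge> -1" using elim by simp
      show "ck n * e1 n (k n) + ck1 n * e1 n (k n + 1) - ck n * Bd n (k n) - ck1 n * Bd n (k n + 1) \<ge> -1" using elim by simp
    qed
  qed
  define A where "A = 1 / a - 1"
  have obj_ev: "eventually (\<lambda>n. lp_objective n a (xstar \<beta> n) = - (ck n * (1 + e1 n (k n) * A) + ck1 n * (1 + e1 n (k n + 1) * A))) sequentially"
    using evK
  proof eventually_elim
    case (elim n)
    have kk: "1 \<le> k n" "k n + 1 \<le> n" "2 \<le> n" using elim by auto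
    have kr0: "kraw n j 0 = real (n choose j)" if "j \<le> n" for j
      using kraw_Eh[of 0 n j] Eh_0[OF that] that by (simp add: field_simps)
    have kr1: "kraw n j 1 = real (n choose j) * e1 n j" if "j \<le> n" for j
    proof -
      have "kraw n j 1 = real (n choose j) * Eh n j 1" using kraw_Eh[of 1 n j] that kk by (simp add: field_simps)
      moreover have "Eh n j 1 = e1 n j" using Eh_1[OF that] kk unfolding e1_def by simp
      ultimately show ?thesis by simp
    qed
    have Cp: "real (n choose k n) > 0" "real (n choose (k n + 1)) > 0" using kk by auto
    have "lp_objective n a (xstar \<beta> n) = - ((kraw n (k n) 0 + kraw n (k n) 1 * A) * xstar \<beta> n (k n) + (kraw n (k n + 1) 0 + kraw n (k n + 1) 1 * A) * xstar \<beta> n (k n + 1))"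
      unfolding lp_objective_def A_def by (subst sum_two[OF kk(1,2)]) (auto simp: xs)
    also have "\<dots> = - (ck n * (1 + e1 n (k n) * A) + ck1 n * (1 + e1 n (k n + 1) * A))"
      using kk Cp by (simp add: xs kr0 kr1 field_simps)
    finally show ?case .
  qed
  have objL: "(\<lambda>n. - (ck n * (1 + e1 n (k n) * A) + ck1 n * (1 + e1 n (k n + 1) * A))) \<longlonglongrightarrow> - (Ck * (1 + (1 - 2 * \<beta>) * A) + Ck1 * (1 + (1 - 2 * \<beta>) * A))"
    by (intro tendsto_intros ckL ck1L e1kL e1k1L)
  have "- (Ck * (1 + (1 - 2 * \<beta>) * A) + Ck1 * (1 + (1 - 2 * \<beta>) * A)) = bound_fun a \<beta>"
    unfolding bound_fun_def A_def[symmetric] Csum[symmetric] by (simp add: algebra_simps)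
  with objL have "(\<lambda>n. lp_objective n a (xstar \<beta> n)) \<longlonglongrightarrow> bound_fun a \<beta>"
    using iffD1[OF tendsto_cong[OF obj_ev[THEN eventually_mono[where Q = "\<lambda>n. - (ck n * (1 + e1 n (k n) * A) + ck1 n * (1 + e1 n (k n + 1) * A)) = lp_objective n a (xstar \<beta> n)"]]]] by auto
  with feas show ?thesis by simp
qed


lemma l1: "(s::real) > 0 \<Longrightarrow> (1 - s)^2 / s^2 * ((1 + u) * u) - (u * ((1 - s^2) / s^2) - 1) = ((1 - s) * u - s)^2 / s^2"
proof -
  assume s: "s > 0"
  have "(1 - s)^2 / s^2 * ((1 + u) * u) - (u * ((1 - s^2) / s^2) - 1) = ((1 - s)^2 * ((1 + u) * u) - u * (1 - s^2) + s^2) / s^2"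
    using s by (simp add: field_simps)
  also have "(1 - s)^2 * ((1 + u) * u) - u * (1 - s^2) + s^2 = ((1 - s) * u - s)^2"
    by (simp add: power2_eq_square algebra_simps)
  finally show ?thesis .
qed
lemma l2: "(A - 1) / 2 * ((1 + u) * u) - (u * A - 1) = ((A - 1) * u - 2) * (u - (1::real)) / 2"
proof -
  have "(A - 1) / 2 * ((1 + u) * u) - (u * A - 1) = ((A - 1) * ((1 + u) * u) - 2 * (u * A - 1)) / 2" by (simp add: field_simps)
  also have "(A - 1) * ((1 + u) * u) - 2 * (u * A - 1) = ((A - 1) * u - 2) * (u - 1)" by (simp add: algebra_simps)
  finally show ?thesis .
qed
lemma l3: "(s::real) > 0 \<Longrightarrow> s < 1/2 \<Longrightarrow> - (1 + (1 - 2 * (1 / (2 * (1 - s)))) * (1 / s^2 - 1)) * (1 / (2 * (1 / (2 * (1 - s))) * (2 * (1 / (2 * (1 - s))) - 1))) = (1 - s)^2 / s^2"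
proof -
  assume s: "s > 0" "s < 1/2"
  have s1: "1 - s \<noteq> 0" using s by simp
  have e1: "2 * (1 / (2 * (1 - s))) = 1 / (1 - s)" using s1 by (simp add: field_simps)
  have e2: "1 - 1 / (1 - s) = - s / (1 - s)" using s1 by (simp add: field_simps)
  have e3: "1 / (1 - s) - 1 = s / (1 - s)" using s1 by (simp add: field_simps)
  have "- (1 + (1 - 1 / (1 - s)) * (1 / s^2 - 1)) = 1 / s" unfolding e2 using s s1 by (simp add: field_simps power2_eq_square)
  moreover have "1 / (1 / (1 - s) * (1 / (1 - s) - 1)) = (1 - s)^2 / s" unfolding e3 using s s1 by (simp add: field_simps power2_eq_square)
  ultimately show ?thesis unfolding e1 using s by (simp add: power2_eq_square)
qed

lemma sqrt_small: "0 < (a::real) \<Longrightarrow> a < 1/4 \<Longrightarrow> 0 < sqrt a \<and> sqrt a < 1/2"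
proof -
  assume a: "0 < a" "a < 1/4"
  have "sqrt a < sqrt (1/4)" using a by (simp only: real_sqrt_less_iff)
  moreover have "sqrt (1/4::real) = 1/2" by (simp add: real_sqrt_divide)
  ultimately show ?thesis using a by simp
qed

lemma bound_fun_u:
  assumes "1/2 < b"
  shows "bound_fun a b = ((2*b-1) * (1/a - 1) - 1) / ((1 + (2*b-1)) * (2*b-1))"
  unfolding bound_fun_def using assms by (simp add: field_simps)

lemma bound_le_theta:
  assumes a0: "0 < a" and a1: "a \<le> 1/2" and b1: "1/2 < b" and b2: "b < 1"
  shows "bound_fun a b \<le> theta a"
proof -
  define u where "u = 2*b - 1"
  define A where "A = 1/a - 1"
  have u: "0 < u" "u < 1" unfolding u_def using b1 b2 by auto
  have A1: "A \<ge> 1" unfolding A_def using a0 a1 by (simp add: field_simps)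
  have bf: "bound_fun a b = (u * A - 1) / ((1 + u) * u)" unfolding u_def A_def by (rule bound_fun_u[OF b1])
  have den: "(1 + u) * u > 0" using u by simp
  have key: "u * A - 1 \<le> theta a * ((1 + u) * u)"
  proof (cases "a < 1/4")
    case True
    define s where "s = sqrt a"
    have s: "0 < s" "s < 1/2" unfolding s_def using sqrt_small[OF a0 True] by auto
    have as: "a = s^2" unfolding s_def using a0 by simp
    have th0: "theta a = (1 - s)^2 / a" unfolding theta_def s_def using True by simp
    have th: "theta a = (1 - s)^2 / s^2" unfolding th0 by (subst as) simp
    have Ae: "A = (1 - s^2) / s^2" unfolding A_def as using s by (simp add: field_simps)
    have "theta a * ((1 + u) * u) - (u * A - 1) = ((1 - s) * u - s)^2 / s^2"
      unfolding th Ae using l1[OF s(1)] .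
    moreover have "((1 - s) * u - s)^2 / s^2 \<ge> 0" by simp
    ultimately show ?thesis by linarith
  next
    case False
    have th: "theta a = (A - 1) / 2" unfolding theta_def A_def using False by simp
    have A3: "A \<le> 3" unfolding A_def using False a0 by (simp add: field_simps)
    have "theta a * ((1 + u) * u) - (u * A - 1) = ((A - 1) * u - 2) * (u - 1) / 2"
      unfolding th by (rule l2)
    moreover have "((A - 1) * u - 2) * (u - 1) \<ge> 0"
    proof -
      have "(A - 1) * u \<le> 2 * 1" using A1 A3 u by (intro mult_mono) auto
      then have "(A - 1) * u - 2 \<le> 0" by simp
      moreover have "u - 1 \<le> 0" using u by simp
      ultimately show ?thesis by (simp add: mult_nonpos_nonpos)
    qed
    ultimately show ?thesis by linarith
  qed
  show ?thesis unfolding bf using key den by (simp add: divide_le_eq)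
qed

lemma beta0_facts:
  assumes a0: "0 < a" and a4: "a < 1/4"
  shows "1 / (2 * (1 - sqrt a)) \<in> {1/2<..<1} \<and> bound_fun a (1 / (2 * (1 - sqrt a))) = theta a"
proof -
  define s where "s = sqrt a"
  have s: "0 < s" "s < 1/2" unfolding s_def
    using sqrt_small[OF a0 a4] by auto
  have as: "a = s^2" unfolding s_def using a0 by simp
  have th0: "theta a = (1 - s)^2 / a" unfolding theta_def s_def using a4 by simp
  have th: "theta a = (1 - s)^2 / s^2" unfolding th0 by (subst as) simp
  have mem: "1 / (2 * (1 - s)) \<in> {1/2<..<1}" using s by (simp add: field_simps)
  have "bound_fun a (1 / (2 * (1 - s))) = (1 - s)^2 / s^2"
    unfolding bound_fun_def by (subst as) (rule l3[OF s])
  then show ?thesis using mem th unfolding s_def by simp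
qed


theorem mainTheorem5:
  fixes a \<beta> :: real
  assumes "0 < a" "a \<le> 1/2" "1/2 < \<beta>" "\<beta> < 1"
  shows "(\<forall>\<^sub>F n in sequentially. lp_feasible n (xstar \<beta> n))
    \<and> ((\<lambda>n. lp_objective n a (xstar \<beta> n)) \<longlonglongrightarrow> bound_fun a \<beta>)
    \<and> liminf (\<lambda>n. Lambda_bar n a) \<ge> ereal (SUP b\<in>{1/2<..<1}. bound_fun a b)
    \<and> (SUP b\<in>{1/2<..<1}. bound_fun a b) = theta a
    \<and> (a < 1/4 \<longrightarrow> 1 / (2 * (1 - sqrt a)) \<in> {1/2<..<1}
          \<and> bound_fun a (1 / (2 * (1 - sqrt a))) = theta a)"
proof -
  note a0 = assms(1) and a1 = assms(2)
  define S where "S = {1/2<..<(1::real)}"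
  have P12: "(\<forall>\<^sub>F n in sequentially. lp_feasible n (xstar \<beta> n))
    \<and> ((\<lambda>n. lp_objective n a (xstar \<beta> n)) \<longlonglongrightarrow> bound_fun a \<beta>)"
    by (rule main_beta[OF assms(3,4)])
  have neS: "S \<noteq> {}" unfolding S_def by (auto intro!: exI[of _ "3/4"])
  have ub: "\<And>b. b \<in> S \<Longrightarrow> bound_fun a b \<le> theta a"
    unfolding S_def by (rule bound_le_theta[OF a0 a1]) auto
  have bdd: "bdd_above (bound_fun a ` S)" by (rule bdd_aboveI2[of S "bound_fun a" "theta a"]) (rule ub)
  have SUPle: "(SUP b\<in>S. bound_fun a b) \<le> theta a" by (rule cSUP_least[OF neS ub])
  have SUPge: "theta a \<le> (SUP b\<in>S. bound_fun a b)"
  proof (cases "a < 1/4")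
    case True
    from beta0_facts[OF a0 True] have m: "1 / (2 * (1 - sqrt a)) \<in> S" and e: "bound_fun a (1 / (2 * (1 - sqrt a))) = theta a"
      unfolding S_def by auto
    show ?thesis using cSUP_upper[OF m bdd] e by simp
  next
    case False
    have lim: "((\<lambda>b. bound_fun a b) \<longlongrightarrow> - (1 + (1 - 2 * 1) * (1 / a - 1)) * (1 / (2 * 1 * (2 * 1 - 1)))) (at_left (1::real))"
      unfolding bound_fun_def by (intro tendsto_intros) simp_all
    have th: "- (1 + (1 - 2 * 1) * (1 / a - 1)) * (1 / (2 * 1 * (2 * 1 - 1))) = theta a"
      unfolding theta_def using False by (simp add: field_simps)
    have ev: "eventually (\<lambda>b. bound_fun a b \<le> (SUP b\<in>S. bound_fun a b)) (at_left (1::real))"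
    proof -
      have "eventually (\<lambda>b. b \<in> {1/2<..<(1::real)}) (at_left 1)" by (rule eventually_at_left_real) simp
      then show ?thesis
      proof (rule eventually_mono)
        fix b :: real assume "b \<in> {1/2<..<1}"
        then show "bound_fun a b \<le> (SUP b\<in>S. bound_fun a b)" using cSUP_upper[OF _ bdd] unfolding S_def by blast
      qed
    qed
    show ?thesis using tendsto_le[OF trivial_limit_at_left_real tendsto_const lim ev] th by simp
  qed
  have SUPeq: "(SUP b\<in>S. bound_fun a b) = theta a" using SUPle SUPge by simp
  define L where "L = liminf (\<lambda>n. Lambda_bar n a)"
  have each: "ereal (bound_fun a b) \<le> L" if b: "b \<in> S" for b
  proof -
    have b12: "1/2 < b" "b < 1" using b unfolding S_def by auto
    from main_beta[OF b12, of a] have F: "eventually (\<lambda>n. lp_feasible n (xstar b n)) sequentially"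
      and T: "(\<lambda>n. lp_objective n a (xstar b n)) \<longlonglongrightarrow> bound_fun a b" by auto
    have "eventually (\<lambda>n. ereal (lp_objective n a (xstar b n)) \<le> Lambda_bar n a) sequentially"
      using F
    proof eventually_elim
      case (elim n)
      then show ?case unfolding Lambda_bar_def by (intro SUP_upper) simp
    qed
    then have "liminf (\<lambda>n. ereal (lp_objective n a (xstar b n))) \<le> L" unfolding L_def by (rule Liminf_mono)
    moreover have "liminf (\<lambda>n. ereal (lp_objective n a (xstar b n))) = ereal (bound_fun a b)"
      by (rule lim_imp_Liminf) (simp_all add: T)
    ultimately show ?thesis by simp
  qed
  have P3: "ereal (SUP b\<in>S. bound_fun a b) \<le> L"
  proof (cases L)
    case (real l)
    have "(SUP b\<in>S. bound_fun a b) \<le> l" by (rule cSUP_least[OF neS]) (use each real in auto)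
    then show ?thesis using real by simp
  next
    case PInf then show ?thesis by simp
  next
    case MInf
    have "(3/4::real) \<in> S" unfolding S_def by simp
    from each[OF this] MInf show ?thesis by simp
  qed
  have P5: "a < 1/4 \<longrightarrow> 1 / (2 * (1 - sqrt a)) \<in> {1/2<..<1} \<and> bound_fun a (1 / (2 * (1 - sqrt a))) = theta a"
    using beta0_facts[OF a0] by blast
  show ?thesis using P12 P3 SUPeq P5 unfolding S_def L_def by blast
qed


end
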